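(* Let $A=(a_1,\dots,a_k)$ be a telescopic sequence of positive integers which is minimal, i.e. no $a_i$ is an $\mathbb{N}_0$-linear combination of the other $a_j$. If $\gcd(a_i,a_j)=1$ for some $i<j$, then $j=k$.
   Context: For a sequence $A=(a_1,\dots,a_k)$ of non-negative integers, let $d_i=\gcd(a_1,\dots,a_i)$ and $S_i=\langle a_1,\dots,a_i\rangle$ (the set of $\mathbb{N}_0$-linear combinations of $a_1,\dots,a_i$) for $i\in\{1,\dots,k\}$, and let $c_j=d_{j-1}/d_j$ for $j\in\{2,\dots,k\}$. The sequence $A$ is telescopic if $c_ja_j\in S_{j-1}$ for all $j\in\{2,\dots,k\}$. *)

theory Defs
  imports Main
begin

text \<open>Sequences A = (a_1,...,a_k) are represented by a function a :: nat => nat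
  together with the length k; only the values a 1, ..., a k matter.\<close>

definition seq_gcd :: "(nat \<Rightarrow> nat) \<Rightarrow> nat \<Rightarrow> nat" where
  "seq_gcd a i = Gcd (a ` {1..i})"

definition seq_semigroup :: "(nat \<Rightarrow> nat) \<Rightarrow> nat \<Rightarrow> nat set" where
  "seq_semigroup a i = {(\<Sum>l\<in>{1..i}. c l * a l) | c. True}"

definition seq_c :: "(nat \<Rightarrow> nat) \<Rightarrow> nat \<Rightarrow> nat" where
  "seq_c a j = seq_gcd a (j - 1) div seq_gcd a j"

definition telescopic :: "(nat \<Rightarrow> nat) \<Rightarrow> nat \<Rightarrow> bool" where
  "telescopic a k \<longleftrightarrow> (\<forall>j\<in>{2..k}. seq_c a j * a j \<in> seq_semigroup a (j - 1))"

definition minimal_seq :: "(nat \<Rightarrow> nat) \<Rightarrow> nat \<Rightarrow> bool" where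
  "minimal_seq a k \<longleftrightarrow>
     (\<forall>i\<in>{1..k}. \<not> (\<exists>c. a i = (\<Sum>l\<in>{1..k} - {i}. c l * a l)))"

end

theory Submission
  imports Defs
begin

theorem mainTheorem11:
  fixes a :: "nat \<Rightarrow> nat" and k i j :: nat
  assumes "\<forall>l\<in>{1..k}. 0 < a l"
    and "telescopic a k"
    and "minimal_seq a k"
    and "1 \<le> i" and "i < j" and "j \<le> k"
    and "gcd (a i) (a j) = 1"
  shows "j = k"
proof (rule ccontr)
  assume "j \<noteq> k"
  hence jk: "j < k" using assms(6) by simp
  have g: "Gcd (a ` {1..m}) = 1" if "j \<le> m" for m
  proof -
    have "i \<in> {1..m}" "j \<in> {1..m}" using assms(4,5) that by auto
    hence "Gcd (a ` {1..m}) dvd a i" "Gcd (a ` {1..m}) dvd a j" by auto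
    hence "Gcd (a ` {1..m}) dvd gcd (a i) (a j)" by simp
    thus ?thesis using assms(7) by simp
  qed
  have c1: "seq_c a k = 1"
    unfolding seq_c_def seq_gcd_def using g[of k] g[of "k-1"] jk by simp
  have "k \<in> {2..k}" using jk assms(4,5) by auto
  hence "seq_c a k * a k \<in> seq_semigroup a (k - 1)"
    using assms(2) unfolding telescopic_def by blast
  then obtain c where "a k = (\<Sum>l\<in>{1..k-1}. c l * a l)"
    using c1 unfolding seq_semigroup_def by auto
  moreover have "{1..k} - {k} = {1..k-1}" using jk by auto
  ultimately have "\<exists>c. a k = (\<Sum>l\<in>{1..k} - {k}. c l * a l)" by auto
  moreover have "k \<in> {1..k}" using jk by auto
  ultimately show False using assms(3) unfolding minimal_seq_def by blast
qed

end
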